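(* Let $k\ge1$ and let $f$ be a sufficiently differentiable (at least $(3k-2)$-times differentiable) function of one variable. Then $$\Delta\Bigl(\tfrac{\partial}{\partial x_1},\dots,\tfrac{\partial}{\partial x_{2k}}\Bigr)\Delta\Bigl(\tfrac{\partial}{\partial x_1},\dots,\tfrac{\partial}{\partial x_{k}}\Bigr)\Delta\Bigl(\tfrac{\partial}{\partial x_{k+1}},\dots,\tfrac{\partial}{\partial x_{2k}}\Bigr)\prod_{i=1}^{2k}f(x_i),$$ evaluated at $x_1=\cdots=x_k=1$, $x_{k+1}=\cdots=x_{2k}=-1$, equals $k!^2\det(m_{ij})_{1\le i,j\le 2k}$, where for $1\le i\le k$ and $1\le j\le 2k$, $$m_{ij}=f^{(i+j-2)}(1),\qquad m_{k+i,j}=f^{(i+j-2)}(-1).$$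
   Context: $\Delta(z_1,\dots,z_n)=\prod_{1\le i<j\le n}(z_j-z_i)$ is the Vandermonde polynomial, and $\Delta(\partial/\partial x_{i_1},\dots,\partial/\partial x_{i_n})$ denotes the constant-coefficient differential operator obtained by substituting $z_m=\partial/\partial x_{i_m}$. *)

theory Defs
  imports "HOL-Analysis.Analysis" "Jordan_Normal_Form.Determinant"
begin

text \<open>Functions of several real variables x_1, x_2, ... are modelled as
  functions of a point (nat \<Rightarrow> real); only finitely many coordinates matter.\<close>

definition partial :: "nat \<Rightarrow> ((nat \<Rightarrow> real) \<Rightarrow> real) \<Rightarrow> (nat \<Rightarrow> real) \<Rightarrow> real" where
  "partial i F x = deriv (\<lambda>t. F (x(i := t))) (x i)"

definition diff_op :: "nat \<Rightarrow> nat \<Rightarrow> ((nat \<Rightarrow> real) \<Rightarrow> real) \<Rightarrow> (nat \<Rightarrow> real) \<Rightarrow> real" where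
  "diff_op i j F = (\<lambda>x. partial j F x - partial i F x)"

definition vand_pairs :: "nat list \<Rightarrow> (nat \<times> nat) list" where
  "vand_pairs xs = [(xs ! a, xs ! b). b \<leftarrow> [0..<length xs], a \<leftarrow> [0..<b]]"

text \<open>The differential operator Delta(d/dx_{i_1},...,d/dx_{i_n}) =
  prod_{m<l} (d/dx_{i_l} - d/dx_{i_m}), i.e. the composition of the factors.\<close>
definition vand_op :: "nat list \<Rightarrow> ((nat \<Rightarrow> real) \<Rightarrow> real) \<Rightarrow> (nat \<Rightarrow> real) \<Rightarrow> real" where
  "vand_op xs F = foldr (\<lambda>(i, j) G. diff_op i j G) (vand_pairs xs) F"

end

theory Submission
  imports Defs "HOL-Library.Poly_Mapping"
begin

type_synonym mpoly = "(nat \<Rightarrow>\<^sub>0 nat) \<Rightarrow>\<^sub>0 real"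

definition Mon :: "(real \<Rightarrow> real) \<Rightarrow> nat \<Rightarrow> (nat \<Rightarrow>\<^sub>0 nat) \<Rightarrow> (nat \<Rightarrow> real) \<Rightarrow> real" where
  "Mon f n a x = (\<Prod>i\<in>{1..n}. (deriv ^^ Poly_Mapping.lookup a i) f (x i))"

definition Lam :: "(real \<Rightarrow> real) \<Rightarrow> nat \<Rightarrow> mpoly \<Rightarrow> (nat \<Rightarrow> real) \<Rightarrow> real" where
  "Lam f n Q x = (\<Sum>a\<in>Poly_Mapping.keys Q. Poly_Mapping.lookup Q a * Mon f n a x)"

definition Xv :: "nat \<Rightarrow> mpoly" where
  "Xv j = Poly_Mapping.single (Poly_Mapping.single j 1) 1"

lemma Mon_split:
  assumes "j \<in> {1..n}"
  shows "Mon f n a x = (deriv ^^ Poly_Mapping.lookup a j) f (x j) * (\<Prod>i\<in>{1..n}-{j}. (deriv ^^ Poly_Mapping.lookup a i) f (x i))"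
  unfolding Mon_def using assms by (simp add: prod.remove)

lemma Mon_deriv:
  assumes j: "j \<in> {1..n}" and d: "(deriv ^^ Poly_Mapping.lookup a j) f differentiable (at t)"
  shows "((\<lambda>s. Mon f n a (x(j:=s))) has_real_derivative Mon f n (Poly_Mapping.single j 1 + a) (x(j:=t))) (at t)"
proof -
  let ?C = "(\<Prod>i\<in>{1..n}-{j}. (deriv ^^ Poly_Mapping.lookup a i) f (x i))"
  have e1: "Mon f n a (x(j:=s)) = (deriv ^^ Poly_Mapping.lookup a j) f s * ?C" for s
  proof -
    have "(\<Prod>i\<in>{1..n}-{j}. (deriv ^^ Poly_Mapping.lookup a i) f ((x(j:=s)) i)) = ?C"
      by (rule prod.cong) auto
    then show ?thesis using Mon_split[OF j, of f a "x(j:=s)"] by simp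
  qed
  have e2: "Mon f n (Poly_Mapping.single j 1 + a) (x(j:=t)) = deriv ((deriv ^^ Poly_Mapping.lookup a j) f) t * ?C"
  proof -
    have "(\<Prod>i\<in>{1..n}-{j}. (deriv ^^ Poly_Mapping.lookup (Poly_Mapping.single j 1 + a) i) f ((x(j:=t)) i)) = ?C"
      by (rule prod.cong) (auto simp: lookup_add lookup_single)
    then show ?thesis using Mon_split[OF j, of f "Poly_Mapping.single j 1 + a" "x(j:=t)"]
      by (simp add: lookup_add lookup_single)
  qed
  have "((deriv ^^ Poly_Mapping.lookup a j) f has_real_derivative deriv ((deriv ^^ Poly_Mapping.lookup a j) f) t) (at t)"
    using d DERIV_deriv_iff_real_differentiable by blast
  then have "((\<lambda>s. (deriv ^^ Poly_Mapping.lookup a j) f s * ?C) has_real_derivative deriv ((deriv ^^ Poly_Mapping.lookup a j) f) t * ?C) (at t)"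
    by (rule DERIV_cmult_right)
  then show ?thesis unfolding e1 e2 .
qed

lemma Lam_add: "Lam f n (P + Q) x = Lam f n P x + Lam f n Q x"
  unfolding Lam_def
  by (rule setsum_keys_plus_distrib) (auto simp: distrib_right)

lemma Lam_zero[simp]: "Lam f n 0 x = 0"
  unfolding Lam_def by simp

lemma Lam_uminus: "Lam f n (- Q) x = - Lam f n Q x"
proof -
  have "Lam f n (- Q + Q) x = 0" by simp
  then show ?thesis unfolding Lam_add by linarith
qed

lemma Lam_diff: "Lam f n (P - Q) x = Lam f n P x - Lam f n Q x"
  using Lam_add[of f n P "-Q" x] Lam_uminus[of f n Q x] by simp

lemma Lam_sum: "finite S \<Longrightarrow> Lam f n (\<Sum>s\<in>S. P s) x = (\<Sum>s\<in>S. Lam f n (P s) x)"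
  by (induction S rule: finite_induct) (auto simp: Lam_add)

lemma Lam_single: "Lam f n (Poly_Mapping.single a c) x = c * Mon f n a x"
  unfolding Lam_def by auto

lemma poly_expand: "(Q::mpoly) = (\<Sum>a\<in>Poly_Mapping.keys Q. Poly_Mapping.single a (Poly_Mapping.lookup Q a))"
proof (rule poly_mapping_eqI)
  fix b
  show "Poly_Mapping.lookup Q b = Poly_Mapping.lookup (\<Sum>a\<in>Poly_Mapping.keys Q. Poly_Mapping.single a (Poly_Mapping.lookup Q a)) b"
    by (cases "b \<in> Poly_Mapping.keys Q") (auto simp: lookup_sum lookup_single when_def in_keys_iff)
qed

lemma X_mult: "Xv j * Q = (\<Sum>a\<in>Poly_Mapping.keys Q. Poly_Mapping.single (Poly_Mapping.single j 1 + a) (Poly_Mapping.lookup Q a))"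
proof -
  have "Xv j * Q = Xv j * (\<Sum>a\<in>Poly_Mapping.keys Q. Poly_Mapping.single a (Poly_Mapping.lookup Q a))"
    using poly_expand[of Q] by simp
  also have "\<dots> = (\<Sum>a\<in>Poly_Mapping.keys Q. Poly_Mapping.single (Poly_Mapping.single j 1 + a) (Poly_Mapping.lookup Q a))"
    unfolding sum_distrib_left Xv_def mult_single by simp
  finally show ?thesis .
qed

lemma Lam_X_mult: "Lam f n (Xv j * Q) x = (\<Sum>a\<in>Poly_Mapping.keys Q. Poly_Mapping.lookup Q a * Mon f n (Poly_Mapping.single j 1 + a) x)"
  unfolding X_mult by (simp add: Lam_sum Lam_single)

lemma partial_Lam:
  assumes j: "j \<in> {1..n}" and d: "\<forall>a\<in>Poly_Mapping.keys Q. \<forall>t. (deriv ^^ Poly_Mapping.lookup a j) f differentiable (at t)"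
  shows "partial j (Lam f n Q) x = Lam f n (Xv j * Q) x"
proof -
  have "((\<lambda>t. Lam f n Q (x(j:=t))) has_real_derivative
          (\<Sum>a\<in>Poly_Mapping.keys Q. Poly_Mapping.lookup Q a * Mon f n (Poly_Mapping.single j 1 + a) (x(j:=x j)))) (at (x j))"
    unfolding Lam_def
    by (intro DERIV_sum DERIV_cmult Mon_deriv j) (use d in auto)
  then have "partial j (Lam f n Q) x = (\<Sum>a\<in>Poly_Mapping.keys Q. Poly_Mapping.lookup Q a * Mon f n (Poly_Mapping.single j 1 + a) x)"
    unfolding partial_def by (simp add: DERIV_imp_deriv)
  then show ?thesis by (simp add: Lam_X_mult)
qed

lemma diff_op_Lam:
  assumes "i \<in> {1..n}" "j \<in> {1..n}"
    and "\<forall>a\<in>Poly_Mapping.keys Q. \<forall>t. (deriv ^^ Poly_Mapping.lookup a i) f differentiable (at t)"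
    and "\<forall>a\<in>Poly_Mapping.keys Q. \<forall>t. (deriv ^^ Poly_Mapping.lookup a j) f differentiable (at t)"
  shows "diff_op i j (Lam f n Q) = Lam f n ((Xv j - Xv i) * Q)"
  unfolding diff_op_def using assms
  by (auto simp: partial_Lam left_diff_distrib Lam_diff)


definition cnt :: "nat \<Rightarrow> (nat \<times> nat) list \<Rightarrow> nat" where
  "cnt i ps = length (filter (\<lambda>(a,b). a = i \<or> b = i) ps)"

definition pprod :: "(nat \<times> nat) list \<Rightarrow> mpoly" where
  "pprod ps = foldr (\<lambda>(i,j) P. (Xv j - Xv i) * P) ps 1"

lemma keys_Xdiff: "Poly_Mapping.keys (Xv b - Xv a) \<subseteq> {Poly_Mapping.single a 1, Poly_Mapping.single b 1}"
proof -
  have "Poly_Mapping.keys (Xv b + (- Xv a)) \<subseteq> Poly_Mapping.keys (Xv b) \<union> Poly_Mapping.keys (- Xv a)"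
    by (rule keys_add)
  then show ?thesis by (auto simp: Xv_def)
qed

lemma keys_mult_bound:
  assumes "g \<in> Poly_Mapping.keys (P * Q)"
  obtains a b where "a \<in> Poly_Mapping.keys P" "b \<in> Poly_Mapping.keys Q" "g = a + b"
  using keys_mult[of P Q] assms by blast

lemma keys_pprod: "b \<in> Poly_Mapping.keys (pprod ps) \<Longrightarrow> Poly_Mapping.lookup b i \<le> cnt i ps"
proof (induction ps arbitrary: b)
  case Nil
  then show ?case by (simp add: pprod_def)
next
  case (Cons p ps)
  obtain u v where p: "p = (u,v)" by (cases p)
  have "b \<in> Poly_Mapping.keys ((Xv v - Xv u) * pprod ps)"
    using Cons.prems by (simp add: pprod_def p)
  then obtain c d where c: "c \<in> Poly_Mapping.keys (Xv v - Xv u)" and d: "d \<in> Poly_Mapping.keys (pprod ps)"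
    and b: "b = c + d" by (rule keys_mult_bound)
  have "Poly_Mapping.lookup c i \<le> (if u = i \<or> v = i then 1 else 0)"
    using c keys_Xdiff[of v u] by (auto simp: lookup_single when_def)
  moreover have "Poly_Mapping.lookup d i \<le> cnt i ps" using Cons.IH d by blast
  ultimately show ?case by (auto simp: b lookup_add cnt_def p)
qed

lemma fold_Lam:
  assumes N: "\<forall>m < N. \<forall>x. (deriv ^^ m) f differentiable (at x)"
    and ps: "\<forall>(a,b)\<in>set ps. a \<in> {1..n} \<and> b \<in> {1..n}"
    and Q: "\<forall>g\<in>Poly_Mapping.keys Q. \<forall>i. Poly_Mapping.lookup g i + cnt i ps \<le> N"
  shows "foldr (\<lambda>(i, j) G. diff_op i j G) ps (Lam f n Q) = Lam f n (pprod ps * Q)"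
  using ps Q
proof (induction ps)
  case Nil
  then show ?case by (simp add: pprod_def)
next
  case (Cons p ps)
  obtain u v where p: "p = (u,v)" by (cases p)
  have IH: "foldr (\<lambda>(i, j) G. diff_op i j G) ps (Lam f n Q) = Lam f n (pprod ps * Q)"
  proof (rule Cons.IH)
    show "\<forall>(a, b)\<in>set ps. a \<in> {1..n} \<and> b \<in> {1..n}" using Cons.prems by simp
    show "\<forall>g\<in>Poly_Mapping.keys Q. \<forall>i. Poly_Mapping.lookup g i + cnt i ps \<le> N"
    proof (intro ballI allI)
      fix g i assume "g \<in> Poly_Mapping.keys Q"
      then have "Poly_Mapping.lookup g i + cnt i (p#ps) \<le> N" using Cons.prems(2) by blast
      moreover have "cnt i ps \<le> cnt i (p#ps)" by (simp add: cnt_def)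
      ultimately show "Poly_Mapping.lookup g i + cnt i ps \<le> N" by linarith
    qed
  qed
  have bnd: "Poly_Mapping.lookup g w < N" if gk: "g \<in> Poly_Mapping.keys (pprod ps * Q)" and wuv: "w = u \<or> w = v" for g w
  proof -
    obtain c d where c: "c \<in> Poly_Mapping.keys (pprod ps)" and d: "d \<in> Poly_Mapping.keys Q"
      and g: "g = c + d" using gk by (rule keys_mult_bound)
    have "Poly_Mapping.lookup c w \<le> cnt w ps" using keys_pprod c by blast
    moreover have "Poly_Mapping.lookup d w + cnt w (p#ps) \<le> N" using Cons.prems(2) d by blast
    moreover have "cnt w (p#ps) = Suc (cnt w ps)" using wuv by (auto simp: cnt_def p)
    ultimately show ?thesis by (simp add: g lookup_add)
  qed
  have "foldr (\<lambda>(i, j) G. diff_op i j G) (p#ps) (Lam f n Q) = diff_op u v (Lam f n (pprod ps * Q))"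
    by (simp add: p IH)
  also have "\<dots> = Lam f n ((Xv v - Xv u) * (pprod ps * Q))"
    apply (rule diff_op_Lam)
    using Cons.prems(1) apply (simp add: p)
    using Cons.prems(1) apply (simp add: p)
    using bnd N apply blast
    using bnd N apply blast
    done
  also have "\<dots> = Lam f n (pprod (p#ps) * Q)"
    by (simp add: pprod_def p mult.assoc)
  finally show ?case .
qed

lemma vand_pairs_eq: "vand_pairs zs = concat (map (\<lambda>b. map (\<lambda>a. (zs!a, zs!b)) [0..<b]) [0..<length zs])"
  unfolding vand_pairs_def by (simp add: concat_map_singleton)

lemma vand_pairs_snoc: "vand_pairs (xs @ [y]) = vand_pairs xs @ map (\<lambda>x. (x, y)) xs"
proof -
  have 1: "map (\<lambda>a. ((xs @ [y]) ! a, (xs @ [y]) ! length xs)) [0..<length xs] = map (\<lambda>x. (x, y)) xs"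
    by (rule nth_equalityI) (auto simp: nth_append)
  have 2: "map (\<lambda>b. map (\<lambda>a. ((xs @ [y]) ! a, (xs @ [y]) ! b)) [0..<b]) [0..<length xs]
     = map (\<lambda>b. map (\<lambda>a. (xs ! a, xs ! b)) [0..<b]) [0..<length xs]"
    by (rule map_cong) (auto simp: nth_append)
  have "vand_pairs (xs @ [y]) = concat (map (\<lambda>b. map (\<lambda>a. ((xs @ [y]) ! a, (xs @ [y]) ! b)) [0..<b]) [0..<length xs])
     @ map (\<lambda>a. ((xs @ [y]) ! a, (xs @ [y]) ! length xs)) [0..<length xs]"
    unfolding vand_pairs_eq[of "xs @ [y]"] by simp
  also have "\<dots> = vand_pairs xs @ map (\<lambda>x. (x, y)) xs"
    unfolding 1 2 vand_pairs_eq[of xs] ..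
  finally show ?thesis .
qed

lemma cnt_append: "cnt i (xs @ ys) = cnt i xs + cnt i ys"
  by (simp add: cnt_def)

lemma cnt_vand: "distinct xs \<Longrightarrow> cnt i (vand_pairs xs) \<le> (if i \<in> set xs then length xs - 1 else 0)"
proof (induction xs rule: rev_induct)
  case Nil
  then show ?case by (simp add: cnt_def vand_pairs_def)
next
  case (snoc y xs)
  have d: "distinct xs" "y \<notin> set xs" using snoc.prems by auto
  have c2: "cnt i (map (\<lambda>x. (x, y)) xs) = length (filter (\<lambda>x. x = i \<or> y = i) xs)"
    by (simp add: cnt_def o_def)
  show ?case
  proof (cases "i = y")
    case True
    have "cnt i (map (\<lambda>x. (x, y)) xs) = length xs" using c2 True by simp
    then show ?thesis using snoc.IH[OF d(1)] d(2) True
      by (simp add: vand_pairs_snoc cnt_append)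
  next
    case False
    have "length (filter (\<lambda>x. x = i \<or> y = i) xs) = card ({x. x = i} \<inter> set xs)"
      using distinct_length_filter[OF d(1)] False by simp
    also have "\<dots> = (if i \<in> set xs then 1 else 0)" by auto
    finally have "cnt i (map (\<lambda>x. (x, y)) xs) = (if i \<in> set xs then 1 else 0)" using c2 by simp
    moreover have "i \<in> set xs \<Longrightarrow> length xs \<ge> 1" by (cases xs) auto
    ultimately show ?thesis using snoc.IH[OF d(1)] False
      by (auto simp: vand_pairs_snoc cnt_append)
  qed
qed

lemma det_rows_scale:
  fixes c :: "nat \<Rightarrow> 'a::comm_ring_1"
  shows "det (mat n n (\<lambda>(i,j). c i * A i j)) = prod c {0..<n} * det (mat n n (\<lambda>(i,j). A i j))"
proof -
  have "det (mat n n (\<lambda>(i,j). c i * A i j)) =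
     (\<Sum>p\<in>{p. p permutes {0..<n}}. signof p * (\<Prod>i = 0..<n. c i * A i (p i)))"
    by (subst det_def'[of _ n]) (auto intro!: sum.cong prod.cong)
  also have "\<dots> = (\<Sum>p\<in>{p. p permutes {0..<n}}. prod c {0..<n} * (signof p * (\<Prod>i = 0..<n. A i (p i))))"
    by (rule sum.cong) (auto simp: prod.distrib ac_simps)
  also have "\<dots> = prod c {0..<n} * det (mat n n (\<lambda>(i,j). A i j))"
    by (subst det_def'[of _ n]) (auto simp: sum_distrib_left intro!: sum.cong prod.cong)
  finally show ?thesis .
qed

lemma vandermonde_det:
  fixes x :: "nat \<Rightarrow> 'a::comm_ring_1"
  shows "det (mat n n (\<lambda>(i,j). x i ^ j)) = (\<Prod>b<n. \<Prod>a<b. x b - x a)"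
proof (induction n arbitrary: x)
  case 0
  then show ?case by simp
next
  case (Suc n)
  define V where "V = mat (Suc n) (Suc n) (\<lambda>(i,j). x i ^ j)"
  define U :: "'a mat" where "U = mat (Suc n) (Suc n) (\<lambda>(i,j). if i = j then 1 else if j = Suc i then - x 0 else 0)"
  define W where "W = V * U"
  have V: "V \<in> carrier_mat (Suc n) (Suc n)" and U: "U \<in> carrier_mat (Suc n) (Suc n)"
    unfolding V_def U_def by auto
  have W: "W \<in> carrier_mat (Suc n) (Suc n)" unfolding W_def using V U by auto
  have detU: "det U = 1"
  proof -
    have "upper_triangular U" unfolding U_def by (auto simp: upper_triangular_def)
    then have "det U = prod_list (diag_mat U)" using det_upper_triangular U by blast
    also have "diag_mat U = map (\<lambda>i. 1) [0..<Suc n]"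
      unfolding diag_mat_def by (rule map_cong) (auto simp: U_def)
    also have "prod_list (map (\<lambda>i. 1::'a) [0..<Suc n]) = 1"
      by (induction n) auto
    finally show ?thesis .
  qed
  have Wij: "W $$ (i,j) = (if j = 0 then 1 else x i ^ (j - 1) * (x i - x 0))"
    if ij: "i < Suc n" "j < Suc n" for i j
  proof -
    have "W $$ (i,j) = (\<Sum>l\<in>{0..<Suc n}. x i ^ l * (if l = j then 1 else if j = Suc l then - x 0 else 0))"
      unfolding W_def using ij V U by (simp add: V_def U_def scalar_prod_def)
    also have "\<dots> = (\<Sum>l\<in>{0..<Suc n}. (if l = j then x i ^ l else 0)) + (\<Sum>l\<in>{0..<Suc n}. (if Suc l = j then - (x i ^ l * x 0) else 0))"
      by (subst sum.distrib[symmetric]) (rule sum.cong, auto)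
    also have "\<dots> = (if j = 0 then 1 else x i ^ (j - 1) * (x i - x 0))"
    proof (cases j)
      case 0
      then show ?thesis by simp
    next
      case (Suc m)
      have "(\<Sum>l\<in>{0..<Suc n}. (if Suc l = j then - (x i ^ l * x 0) else 0)) = (\<Sum>l\<in>{0..<Suc n}. (if l = m then - (x i ^ l * x 0) else 0))"
        using Suc by (intro sum.cong) auto
      also have "\<dots> = - (x i ^ m * x 0)" using Suc ij by (simp add: sum.delta)
      finally have s2: "(\<Sum>l\<in>{0..<Suc n}. (if Suc l = j then - (x i ^ l * x 0) else 0)) = - (x i ^ m * x 0)" .
      have s1: "(\<Sum>l\<in>{0..<Suc n}. (if l = j then x i ^ l else 0)) = x i ^ j" using ij by (simp add: sum.delta)
      show ?thesis unfolding s1 s2 using Suc by (simp add: algebra_simps)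
    qed
    finally show ?thesis .
  qed
  have "det V = det W"
    unfolding W_def using det_mult[OF V U] detU by simp
  also have "det W = (\<Sum>j<Suc n. W $$ (0,j) * cofactor W 0 j)"
    by (rule laplace_expansion_row[OF W]) simp
  also have "\<dots> = W $$ (0,0) * cofactor W 0 0"
  proof -
    have "(\<Sum>j<n. W $$ (0, Suc j) * cofactor W 0 (Suc j)) = 0"
      by (rule sum.neutral) (auto simp: Wij)
    then show ?thesis by (simp add: sum.lessThan_Suc_shift del: sum.lessThan_Suc)
  qed
  also have "\<dots> = det (mat_delete W 0 0)"
    by (simp add: cofactor_def Wij)
  also have "mat_delete W 0 0 = mat n n (\<lambda>(i,j). (x (Suc i) - x 0) * x (Suc i) ^ j)"
    by (rule eq_matI) (use W in \<open>auto simp: mat_delete_def Wij mult.commute\<close>)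
  also have "det \<dots> = prod (\<lambda>i. x (Suc i) - x 0) {0..<n} * det (mat n n (\<lambda>(i,j). x (Suc i) ^ j))"
    by (rule det_rows_scale)
  also have "\<dots> = (\<Prod>b<n. x (Suc b) - x 0) * (\<Prod>b<n. \<Prod>a<b. x (Suc b) - x (Suc a))"
    using Suc.IH[of "\<lambda>i. x (Suc i)"] by (simp add: atLeast0LessThan)
  also have "\<dots> = (\<Prod>b<Suc n. \<Prod>a<b. x b - x a)"
    by (simp add: prod.lessThan_Suc_shift prod.distrib del: prod.lessThan_Suc)
  finally show ?case unfolding V_def .
qed



lemma pprod_foldr: "foldr (\<lambda>(i,j) P. (Xv j - Xv i) * P) ps Q = pprod ps * Q"
  by (induction ps) (auto simp: pprod_def mult.assoc split: prod.split)

lemma pprod_append: "pprod (ps @ qs) = pprod ps * pprod qs"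
proof -
  have "pprod (ps @ qs) = foldr (\<lambda>(i,j) P. (Xv j - Xv i) * P) ps (pprod qs)"
    unfolding pprod_def by simp
  then show ?thesis by (simp add: pprod_foldr)
qed

lemma pprod_map: "pprod (map (\<lambda>x. (x,y)) xs) = prod_list (map (\<lambda>x. Xv y - Xv x) xs)"
  by (induction xs) (auto simp: pprod_def)

lemma prod_nth_list: "(\<Prod>a<length xs. g (xs!a)) = prod_list (map g xs)"
proof (induction xs rule: rev_induct)
  case Nil
  then show ?case by simp
next
  case (snoc y xs)
  have "(\<Prod>a<length (xs @ [y]). g ((xs @ [y]) ! a)) = (\<Prod>a<length xs. g ((xs @ [y]) ! a)) * g y"
    by simp
  also have "(\<Prod>a<length xs. g ((xs @ [y]) ! a)) = (\<Prod>a<length xs. g (xs ! a))"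
    by (rule prod.cong) (auto simp: nth_append)
  finally show ?case using snoc.IH by simp
qed

lemma pprod_vand: "pprod (vand_pairs zs) = (\<Prod>b<length zs. \<Prod>a<b. Xv (zs!b) - Xv (zs!a))"
proof (induction zs rule: rev_induct)
  case Nil
  then show ?case by (simp add: vand_pairs_def pprod_def)
next
  case (snoc y xs)
  have "pprod (vand_pairs (xs @ [y])) = pprod (vand_pairs xs) * prod_list (map (\<lambda>x. Xv y - Xv x) xs)"
    by (simp add: vand_pairs_snoc pprod_append pprod_map)
  also have "\<dots> = (\<Prod>b<length xs. \<Prod>a<b. Xv (xs!b) - Xv (xs!a)) * (\<Prod>a<length xs. Xv y - Xv (xs!a))"
    using snoc.IH prod_nth_list[of "\<lambda>x. Xv y - Xv x" xs] by simp
  also have "(\<Prod>b<length xs. \<Prod>a<b. Xv (xs!b) - Xv (xs!a)) = (\<Prod>b<length xs. \<Prod>a<b. Xv ((xs@[y])!b) - Xv ((xs@[y])!a))"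
    by (intro prod.cong) (auto simp: nth_append)
  also have "(\<Prod>a<length xs. Xv y - Xv (xs!a)) = (\<Prod>a<length xs. Xv ((xs@[y])!length xs) - Xv ((xs@[y])!a))"
    by (intro prod.cong) (auto simp: nth_append)
  finally show ?case by simp
qed

lemma vand_det: "pprod (vand_pairs zs) = det (mat (length zs) (length zs) (\<lambda>(i,j). Xv (zs!i) ^ j))"
  using vandermonde_det[of "length zs" "\<lambda>i. Xv (zs!i)"] pprod_vand[of zs] by simp

lemma Xv_pow: "Xv j ^ m = Poly_Mapping.single (Poly_Mapping.single j m) 1"
proof (induction m)
  case 0
  then show ?case by simp
next
  case (Suc m)
  have "Xv j ^ Suc m = Poly_Mapping.single (Poly_Mapping.single j 1 + Poly_Mapping.single j m) 1"
    using Suc by (simp add: Xv_def mult_single)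
  also have "Poly_Mapping.single j 1 + Poly_Mapping.single j m = Poly_Mapping.single j (Suc m)"
    by (simp add: single_add[symmetric])
  finally show ?case .
qed

lemma prod_single: "finite S \<Longrightarrow> (\<Prod>i\<in>S. Poly_Mapping.single (g i) (1::real)) = Poly_Mapping.single (\<Sum>i\<in>S. g i) 1"
proof (induction S rule: finite_induct)
  case empty
  then show ?case by simp
next
  case (insert a S)
  then show ?case by (simp add: mult_single)
qed

lemma Lam_mono: "Lam f n (\<Prod>i\<in>{0..<n}. Xv (Suc i) ^ m i) x = (\<Prod>i\<in>{0..<n}. (deriv ^^ m i) f (x (Suc i)))"
proof -
  define al where "al = (\<Sum>i\<in>{0..<n}. Poly_Mapping.single (Suc i) (m i))"
  have "(\<Prod>i\<in>{0..<n}. Xv (Suc i) ^ m i) = Poly_Mapping.single al 1"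
    unfolding Xv_pow al_def by (rule prod_single) simp
  then have "Lam f n (\<Prod>i\<in>{0..<n}. Xv (Suc i) ^ m i) x = Mon f n al x"
    by (simp add: Lam_single)
  also have "\<dots> = (\<Prod>k<n. (deriv ^^ Poly_Mapping.lookup al (Suc k)) f (x (Suc k)))"
    unfolding Mon_def by (simp add: prod.atLeast1_atMost_eq)
  also have "\<dots> = (\<Prod>i\<in>{0..<n}. (deriv ^^ m i) f (x (Suc i)))"
  proof -
    have lk: "Poly_Mapping.lookup al (Suc k) = m k" if "k < n" for k
    proof -
      have "Poly_Mapping.lookup al (Suc k) = (\<Sum>i\<in>{0..<n}. (if i = k then m i else 0))"
        unfolding al_def lookup_sum by (intro sum.cong refl) (simp add: lookup_single when_def)
      also have "\<dots> = m k" using that by (simp add: sum.delta)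
      finally show ?thesis .
    qed
    have "(\<Prod>k<n. (deriv ^^ Poly_Mapping.lookup al (Suc k)) f (x (Suc k))) = (\<Prod>k<n. (deriv ^^ m k) f (x (Suc k)))"
      by (intro prod.cong refl) (simp add: lk)
    then show ?thesis by (simp add: atLeast0LessThan)
  qed
  finally show ?thesis .
qed

lemma Lam_sign: "Lam f n (of_int (sign p) * P) x = of_int (sign p) * Lam f n P x"
  by (simp add: sign_def Lam_uminus)

lemma Lam_det:
  "Lam f n (det (mat n n (\<lambda>(i,j). Xv (i+1) ^ e i j))) x = det (mat n n (\<lambda>(i,j). (deriv ^^ e i j) f (x (i+1))))"
proof -
  have "det (mat n n (\<lambda>(i,j). Xv (i+1) ^ e i j)) =
        (\<Sum>p\<in>{p. p permutes {0..<n}}. of_int (sign p) * (\<Prod>i\<in>{0..<n}. Xv (i+1) ^ e i (p i)))"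
    by (subst det_def'[of _ n]) (auto intro!: sum.cong prod.cong simp: permutes_in_image)
  then have "Lam f n (det (mat n n (\<lambda>(i,j). Xv (i+1) ^ e i j))) x =
        (\<Sum>p\<in>{p. p permutes {0..<n}}. of_int (sign p) * (\<Prod>i\<in>{0..<n}. (deriv ^^ e i (p i)) f (x (i+1))))"
    by (simp add: Lam_sum Lam_sign Lam_mono finite_permutations)
  also have "\<dots> = det (mat n n (\<lambda>(i,j). (deriv ^^ e i j) f (x (i+1))))"
    by (subst det_def'[of _ n]) (auto intro!: sum.cong prod.cong simp: permutes_in_image)
  finally show ?thesis .
qed



definition shiftp :: "nat \<Rightarrow> (nat \<Rightarrow> nat) \<Rightarrow> nat \<Rightarrow> nat" where
  "shiftp k p i = (if k \<le> i then k + p (i - k) else i)"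

lemma shiftp:
  assumes "p permutes {0..<k}"
  shows "shiftp k p permutes {0..<2*k} \<and> sign (shiftp k p) = sign p"
proof (rule permutes_induct[of p "{0..<k}" "\<lambda>q. shiftp k q permutes {0..<2*k} \<and> sign (shiftp k q) = sign q"])
  show "p permutes {0..<k}" by (rule assms)
  show "finite {0..<k}" by simp
  have "shiftp k id = id" by (auto simp: shiftp_def)
  then show "shiftp k id permutes {0..<2*k} \<and> sign (shiftp k id) = sign (id :: nat \<Rightarrow> nat)"
    by (simp add: permutes_id sign_id)
next
  fix a b and q :: "nat \<Rightarrow> nat"
  assume a: "a \<in> {0..<k}" and b: "b \<in> {0..<k}" and ab0: "a \<noteq> b"
    and IH: "shiftp k q permutes {0..<2*k} \<and> sign (shiftp k q) = sign q" and q: "q permutes {0..<k}"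
  have e: "shiftp k (Transposition.transpose a b \<circ> q) = Transposition.transpose (k+a) (k+b) \<circ> shiftp k q"
  proof
    fix i show "shiftp k (Transposition.transpose a b \<circ> q) i = (Transposition.transpose (k+a) (k+b) \<circ> shiftp k q) i"
      using a b by (cases "k \<le> i") (auto simp: shiftp_def Transposition.transpose_def)
  qed
  have ab: "k + a \<in> {0..<2*k}" "k + b \<in> {0..<2*k}" "k + a \<noteq> k + b" using a b ab0 by auto
  have perm1: "shiftp k q permutes {0..<2*k}" using IH by blast
  have P1: "permutation (shiftp k q)" using perm1 permutation_permutes by blast
  have P2: "permutation q" using q permutation_permutes by blast
  show "shiftp k (Transposition.transpose a b \<circ> q) permutes {0..<2 * k} \<and>
        sign (shiftp k (Transposition.transpose a b \<circ> q)) = sign (Transposition.transpose a b \<circ> q)"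
  proof
    show "shiftp k (Transposition.transpose a b \<circ> q) permutes {0..<2 * k}"
      unfolding e by (rule permutes_compose[OF perm1 permutes_swap_id]) (use ab in auto)
    show "sign (shiftp k (Transposition.transpose a b \<circ> q)) = sign (Transposition.transpose a b \<circ> q)"
      unfolding e using IH ab ab0 P1 P2
      by (simp add: sign_compose permutation_swap_id sign_swap_id)
  qed
qed


lemma vand_pairs_mem:
  assumes "(a,b) \<in> set (vand_pairs zs)"
  shows "a \<in> set zs \<and> b \<in> set zs"
proof -
  obtain a' b' where "b' < length zs" "a' < b'" "a = zs!a'" "b = zs!b'"
    using assms unfolding vand_pairs_eq by auto
  then show ?thesis by auto
qed

lemma sign_sq: "real_of_int (sign p) * real_of_int (sign p) = 1"
  by (simp add: sign_def)

lemma det_expand: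
  "det (mat n n (\<lambda>(i,j). Xv (g i) ^ j)) = (\<Sum>p\<in>{p. p permutes {0..<n}}. of_int (sign p) * (\<Prod>i\<in>{0..<n}. Xv (g i) ^ p i))"
  by (subst det_def'[of _ n]) (auto intro!: sum.cong prod.cong simp: permutes_in_image)

lemma key_term:
  fixes f :: "real \<Rightarrow> real" and k :: nat and \<sigma> \<tau> :: "nat \<Rightarrow> nat"
  assumes s: "\<sigma> permutes {0..<k}" and t: "\<tau> permutes {0..<k}"
  defines "x0 \<equiv> (\<lambda>i::nat. if i \<le> k then (1::real) else -1)"
  defines "Bm \<equiv> mat (2*k) (2*k) (\<lambda>(i, j). if i < k then (deriv ^^ (i + j)) f 1 else (deriv ^^ (i - k + j)) f (-1))"
  shows "Lam f (2*k) (det (mat (2*k) (2*k) (\<lambda>(i,j). Xv (Suc i) ^ j)) *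
            ((\<Prod>i\<in>{0..<k}. Xv (Suc i) ^ \<sigma> i) * (\<Prod>i\<in>{0..<k}. Xv (Suc (k + i)) ^ \<tau> i))) x0
         = of_int (sign \<sigma>) * of_int (sign \<tau>) * det Bm"
proof -
  define \<rho> where "\<rho> i = (if i < k then \<sigma> i else \<tau> (i - k))" for i
  define c where "c i = Xv (Suc i) ^ \<rho> i" for i
  have a: "(\<Prod>i\<in>{0..<k}. Xv (Suc i) ^ \<sigma> i) * (\<Prod>i\<in>{0..<k}. Xv (Suc (k + i)) ^ \<tau> i) = prod c {0..<2*k}"
  proof -
    have "prod c {0..<2*k} = prod c {0..<k} * prod c {k..<2*k}"
      by (rule prod.atLeastLessThan_concat[symmetric]) auto
    also have "prod c {0..<k} = (\<Prod>i\<in>{0..<k}. Xv (Suc i) ^ \<sigma> i)"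
      by (rule prod.cong) (auto simp: c_def \<rho>_def)
    also have "prod c {k..<2*k} = prod c {0+k..<k+k}" by (simp add: mult_2)
    also have "\<dots> = (\<Prod>i\<in>{0..<k}. c (i + k))" by (rule prod.shift_bounds_nat_ivl)
    also have "\<dots> = (\<Prod>i\<in>{0..<k}. Xv (Suc (k + i)) ^ \<tau> i)"
      by (rule prod.cong) (auto simp: c_def \<rho>_def add.commute)
    finally show ?thesis by simp
  qed
  have b: "det (mat (2*k) (2*k) (\<lambda>(i,j). Xv (Suc i) ^ j)) * prod c {0..<2*k}
      = det (mat (2*k) (2*k) (\<lambda>(i,j). Xv (i+1) ^ (j + \<rho> i)))"
  proof -
    have "(\<lambda>(i,j). Xv (i+1) ^ (j + \<rho> i)) = (\<lambda>(i,j). c i * Xv (Suc i) ^ j)"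
      by (auto simp: c_def power_add)
    then show ?thesis using det_rows_scale[where c = c and n = "2*k" and A = "\<lambda>i j. Xv (Suc i) ^ j"] by (simp add: mult.commute)
  qed
  have c: "Lam f (2*k) (det (mat (2*k) (2*k) (\<lambda>(i,j). Xv (i+1) ^ (j + \<rho> i)))) x0
      = det (mat (2*k) (2*k) (\<lambda>(i,j). (deriv ^^ (j + \<rho> i)) f (x0 (i+1))))"
    by (rule Lam_det)
  define \<pi> where "\<pi> = \<sigma> \<circ> shiftp k \<tau>"
  have sh: "shiftp k \<tau> permutes {0..<2*k}" "sign (shiftp k \<tau>) = sign \<tau>" using shiftp[OF t] by auto
  have s2: "\<sigma> permutes {0..<2*k}" using s by (rule permutes_subset) auto
  have pp: "\<pi> permutes {0..<2*k}" unfolding \<pi>_def by (rule permutes_compose[OF sh(1) s2])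
  have sgn: "sign \<pi> = sign \<sigma> * sign \<tau>"
  proof -
    have "permutation \<sigma>" using s permutation_permutes by blast
    moreover have "permutation (shiftp k \<tau>)" using sh(1) permutation_permutes by blast
    ultimately show ?thesis unfolding \<pi>_def using sh(2) by (simp add: sign_compose)
  qed
  have d: "mat (2*k) (2*k) (\<lambda>(i,j). (deriv ^^ (j + \<rho> i)) f (x0 (i+1))) = mat (2*k) (2*k) (\<lambda>(i,j). Bm $$ (\<pi> i, j))"
  proof (rule eq_matI)
    fix i j assume i: "i < dim_row (mat (2*k) (2*k) (\<lambda>(i,j). Bm $$ (\<pi> i, j)))"
      and j: "j < dim_col (mat (2*k) (2*k) (\<lambda>(i,j). Bm $$ (\<pi> i, j)))"
    have i2: "i < 2*k" and j2: "j < 2*k" using i j by auto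
    have pi2: "\<pi> i < 2*k" using pp i2 permutes_in_image[OF pp] by auto
    show "mat (2*k) (2*k) (\<lambda>(i,j). (deriv ^^ (j + \<rho> i)) f (x0 (i+1))) $$ (i, j) = mat (2*k) (2*k) (\<lambda>(i,j). Bm $$ (\<pi> i, j)) $$ (i, j)"
    proof (cases "i < k")
      case True
      have "\<pi> i = \<sigma> i" using True by (simp add: \<pi>_def shiftp_def)
      moreover have "\<sigma> i < k" using permutes_in_image[OF s, of i] True by auto
      ultimately show ?thesis using True i2 j2 pi2 by (simp add: Bm_def \<rho>_def x0_def add.commute)
    next
      case False
      have tk: "\<tau> (i - k) < k" using permutes_in_image[OF t, of "i - k"] False i2 by auto
      have "\<sigma> (k + \<tau> (i - k)) = k + \<tau> (i - k)"
        using s by (rule permutes_not_in) auto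
      then have "\<pi> i = k + \<tau> (i - k)" using False by (simp add: \<pi>_def shiftp_def)
      then show ?thesis using False i2 j2 pi2 tk by (simp add: Bm_def \<rho>_def x0_def add.commute)
    qed
  qed auto
  have e: "det (mat (2*k) (2*k) (\<lambda>(i,j). Bm $$ (\<pi> i, j))) = of_int (sign \<pi>) * det Bm"
    by (rule det_permute_rows[OF _ pp]) (simp add: Bm_def)
  show ?thesis
    unfolding a b c d e sgn by simp
qed


theorem lemma3:
  fixes f :: "real \<Rightarrow> real" and k :: nat
  assumes "k \<ge> 1"
    and "\<forall>m < 3 * k - 2. \<forall>x. (deriv ^^ m) f differentiable (at x)"
  shows "vand_op [1..<2*k+1] (vand_op [1..<k+1] (vand_op [k+1..<2*k+1]
            (\<lambda>x. \<Prod>i\<in>{1..2*k}. f (x i))))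
           (\<lambda>i. if i \<le> k then 1 else -1)
         = (fact k)^2 * det (mat (2*k) (2*k) (\<lambda>(i, j).
              if i < k then (deriv ^^ (i + j)) f 1
              else (deriv ^^ (i - k + j)) f (-1)))"
proof -
  define x0 where "x0 = (\<lambda>i::nat. if i \<le> k then (1::real) else -1)"
  define Bm where "Bm = mat (2*k) (2*k) (\<lambda>(i, j). if i < k then (deriv ^^ (i + j)) f 1 else (deriv ^^ (i - k + j)) f (-1))"
  define pA where "pA = vand_pairs [1..<2*k+1]"
  define pB where "pB = vand_pairs [1..<k+1]"
  define pC where "pC = vand_pairs [k+1..<2*k+1]"
  have F0: "(\<lambda>x. \<Prod>i\<in>{1..2*k}. f (x i)) = Lam f (2*k) 1"
    by (rule ext) (simp add: Lam_def Mon_def)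
  have inA: "\<forall>(a,b)\<in>set pA. a \<in> {1..2*k} \<and> b \<in> {1..2*k}"
    using vand_pairs_mem unfolding pA_def by fastforce
  have inB: "\<forall>(a,b)\<in>set pB. a \<in> {1..2*k} \<and> b \<in> {1..2*k}"
    using vand_pairs_mem unfolding pB_def by fastforce
  have inC: "\<forall>(a,b)\<in>set pC. a \<in> {1..2*k} \<and> b \<in> {1..2*k}"
    using vand_pairs_mem unfolding pC_def by fastforce
  have cA: "cnt i pA \<le> 2*k - 1" for i
    using cnt_vand[of "[1..<2*k+1]" i] unfolding pA_def by (simp del: upt_Suc split: if_splits)
  have cB: "cnt i pB \<le> (if i \<in> {1..k} then k - 1 else 0)" for i
    using cnt_vand[of "[1..<k+1]" i] unfolding pB_def by (simp del: upt_Suc split: if_splits)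
  have cC: "cnt i pC \<le> (if i \<in> {k+1..2*k} then k - 1 else 0)" for i
    using cnt_vand[of "[k+1..<2*k+1]" i] unfolding pC_def by (simp del: upt_Suc split: if_splits)
  have cBC: "cnt i pB + cnt i pC \<le> k - 1" for i
    using cB[of i] cC[of i] by (auto split: if_splits)
  note N = assms(2)
  have s1: "vand_op [k+1..<2*k+1] (Lam f (2*k) 1) = Lam f (2*k) (pprod pC * 1)"
    unfolding vand_op_def pC_def[symmetric]
  proof (rule fold_Lam[OF N inC])
    show "\<forall>g\<in>Poly_Mapping.keys (1::mpoly). \<forall>i. Poly_Mapping.lookup g i + cnt i pC \<le> 3 * k - 2"
    proof (intro ballI allI)
      fix g i assume "g \<in> Poly_Mapping.keys (1::mpoly)"
      then have g0: "g = 0" by simp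
      have "cnt i pC \<le> 3 * k - 2" using cBC[of i] assms(1) by linarith
      then show "Poly_Mapping.lookup g i + cnt i pC \<le> 3 * k - 2" by (simp add: g0)
    qed
  qed
  have s2: "vand_op [1..<k+1] (Lam f (2*k) (pprod pC * 1)) = Lam f (2*k) (pprod pB * (pprod pC * 1))"
    unfolding vand_op_def pB_def[symmetric]
  proof (rule fold_Lam[OF N inB])
    show "\<forall>g\<in>Poly_Mapping.keys (pprod pC * 1). \<forall>i. Poly_Mapping.lookup g i + cnt i pB \<le> 3 * k - 2"
    proof (intro ballI allI)
      fix g i assume "g \<in> Poly_Mapping.keys (pprod pC * 1)"
      then have "Poly_Mapping.lookup g i \<le> cnt i pC" using keys_pprod by simp
      then show "Poly_Mapping.lookup g i + cnt i pB \<le> 3 * k - 2" using cBC[of i] assms(1) by linarith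
    qed
  qed
  have s3: "vand_op [1..<2*k+1] (Lam f (2*k) (pprod pB * (pprod pC * 1))) = Lam f (2*k) (pprod pA * (pprod pB * (pprod pC * 1)))"
    unfolding vand_op_def pA_def[symmetric]
  proof (rule fold_Lam[OF N inA])
    show "\<forall>g\<in>Poly_Mapping.keys (pprod pB * (pprod pC * 1)). \<forall>i. Poly_Mapping.lookup g i + cnt i pA \<le> 3 * k - 2"
    proof (intro ballI allI)
      fix g i assume "g \<in> Poly_Mapping.keys (pprod pB * (pprod pC * 1))"
      then have "g \<in> Poly_Mapping.keys (pprod pB * pprod pC)" by simp
      then obtain c d where c: "c \<in> Poly_Mapping.keys (pprod pB)" and d: "d \<in> Poly_Mapping.keys (pprod pC)"
        and g: "g = c + d" by (rule keys_mult_bound)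
      have "Poly_Mapping.lookup c i \<le> cnt i pB" using keys_pprod c by blast
      moreover have "Poly_Mapping.lookup d i \<le> cnt i pC" using keys_pprod d by blast
      ultimately show "Poly_Mapping.lookup g i + cnt i pA \<le> 3 * k - 2"
        using cBC[of i] cA[of i] assms(1) by (simp add: g lookup_add)
    qed
  qed
  have PA: "pprod pA = det (mat (2*k) (2*k) (\<lambda>(i,j). Xv (Suc i) ^ j))"
    unfolding pA_def vand_det by (rule arg_cong[where f = det], rule eq_matI) (auto simp del: upt_Suc)
  have PB: "pprod pB = det (mat k k (\<lambda>(i,j). Xv (Suc i) ^ j))"
    unfolding pB_def vand_det by (rule arg_cong[where f = det], rule eq_matI) (auto simp del: upt_Suc)
  have PC: "pprod pC = det (mat k k (\<lambda>(i,j). Xv (Suc (k + i)) ^ j))"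
    unfolding pC_def vand_det by (rule arg_cong[where f = det], rule eq_matI) (auto simp del: upt_Suc)
  define S where "S = {p. p permutes {0..<k}}"
  have finS: "finite S" unfolding S_def by (rule finite_permutations) simp
  define mB where "mB \<sigma> = (\<Prod>i\<in>{0..<k}. Xv (Suc i) ^ \<sigma> i)" for \<sigma> :: "nat \<Rightarrow> nat"
  define mC where "mC \<tau> = (\<Prod>i\<in>{0..<k}. Xv (Suc (k + i)) ^ \<tau> i)" for \<tau> :: "nat \<Rightarrow> nat"
  define PAm where "PAm = det (mat (2*k) (2*k) (\<lambda>(i,j). Xv (Suc i) ^ j))"
  have eB: "pprod pB = (\<Sum>\<sigma>\<in>S. of_int (sign \<sigma>) * mB \<sigma>)"
    unfolding PB S_def mB_def by (rule det_expand)
  have eC: "pprod pC = (\<Sum>\<tau>\<in>S. of_int (sign \<tau>) * mC \<tau>)"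
    unfolding PC S_def mC_def by (rule det_expand)
  have prodexp: "pprod pA * (pprod pB * (pprod pC * 1)) =
      (\<Sum>\<sigma>\<in>S. \<Sum>\<tau>\<in>S. of_int (sign \<sigma>) * (of_int (sign \<tau>) * (PAm * (mB \<sigma> * mC \<tau>))))"
    unfolding PA PAm_def[symmetric] eB eC
    by (simp add: sum_product sum_distrib_left ac_simps) (subst sum.swap, simp add: ac_simps)
  have "Lam f (2*k) (pprod pA * (pprod pB * (pprod pC * 1))) x0 =
      (\<Sum>\<sigma>\<in>S. \<Sum>\<tau>\<in>S. of_int (sign \<sigma>) * (of_int (sign \<tau>) * Lam f (2*k) (PAm * (mB \<sigma> * mC \<tau>)) x0))"
    unfolding prodexp using finS by (simp add: Lam_sum Lam_sign)
  also have "\<dots> = (\<Sum>\<sigma>\<in>S. \<Sum>\<tau>\<in>S. det Bm)"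
  proof (intro sum.cong refl)
    fix \<sigma> \<tau> assume s: "\<sigma> \<in> S" and t: "\<tau> \<in> S"
    have "Lam f (2*k) (PAm * (mB \<sigma> * mC \<tau>)) x0 = of_int (sign \<sigma>) * of_int (sign \<tau>) * det Bm"
      unfolding PAm_def mB_def mC_def x0_def Bm_def
      by (rule key_term) (use s t in \<open>auto simp: S_def\<close>)
    then show "of_int (sign \<sigma>) * (of_int (sign \<tau>) * Lam f (2*k) (PAm * (mB \<sigma> * mC \<tau>)) x0) = det Bm"
      using sign_sq[of \<sigma>] sign_sq[of \<tau>] by (simp add: algebra_simps)
  qed
  also have "\<dots> = (fact k)^2 * det Bm"
  proof -
    have "card S = fact k" unfolding S_def by (rule card_permutations) auto
    then show ?thesis by (simp add: power2_eq_square)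
  qed
  finally have fin: "Lam f (2*k) (pprod pA * (pprod pB * (pprod pC * 1))) x0 = (fact k)^2 * det Bm" .
  show ?thesis
    unfolding F0 s1 s2 s3 using fin by (simp add: x0_def Bm_def)
qed

end
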